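(* Let $D$ be a strong asymmetrical digraph with $D\in\mathcal{LE}_3$. Then $\chi_o(D)\leq 6$.
   Context: All digraphs are finite, without loops or multiple arcs. A digraph is asymmetrical if it has no pair of opposite arcs $(u,v),(v,u)$. For an asymmetrical digraph $D$, an oriented $k$-colouring is a proper colouring $V(D)\to\{1,\ldots,k\}$ (vertices joined by an arc get distinct colours) such that all arcs between any two colour classes have the same direction; the oriented chromatic number $\chi_o(D)$ is the least such $k$, equivalently the least order of a tournament $T$ admitting a homomorphism (arc-preserving vertex map) from $D$ to $T$. Paths and cycles are directed; the length of a path or cycle is its number of arcs. A digraph is strong if for every ordered pair of vertices $x,y$ there is a directed path from $x$ to $y$. For a subdigraph $H$ of a digraph $D$, an ear of $H$ in $D$ is either a directed path in $D$ whose two end vertices lie in $H$ and whose internal vertices do not lie in $H$, or a directed cycle in $D$ having exactly one vertex in $H$. An ear decomposition of a strong digraph $D$ is a sequence $(D_0,D_1,\ldots,D_k)$ of strong subdigraphs of $D$ such that $D_0$ is a directed cycle, $D_{j+1}=D_j\cup P_j$ where $P_j$ is an ear of $D_j$ in $D$ for every $j\in\{0,\ldots,k-1\}$, and $D_k=D$. For an integer $i\geq 1$, $\mathcal{LE}_i$ denotes the family of strong digraphs having an ear decomposition in which every ear has length at least $i$. *)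

theory Defs
  imports Main
begin

definition digraph :: "'a set \<Rightarrow> ('a \<times> 'a) set \<Rightarrow> bool" where
  "digraph V A \<longleftrightarrow> finite V \<and> A \<subseteq> V \<times> V \<and> (\<forall>v. (v, v) \<notin> A)"

definition asymmetrical :: "('a \<times> 'a) set \<Rightarrow> bool" where
  "asymmetrical A \<longleftrightarrow> (\<forall>u v. (u, v) \<in> A \<longrightarrow> (v, u) \<notin> A)"

definition strong :: "'a set \<Rightarrow> ('a \<times> 'a) set \<Rightarrow> bool" where
  "strong V A \<longleftrightarrow> (\<forall>x\<in>V. \<forall>y\<in>V. (x, y) \<in> A\<^sup>*)"

definition oriented_colouring :: "'a set \<Rightarrow> ('a \<times> 'a) set \<Rightarrow> nat \<Rightarrow> ('a \<Rightarrow> nat) \<Rightarrow> bool" where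
  "oriented_colouring V A k c \<longleftrightarrow>
     c ` V \<subseteq> {1..k} \<and>
     (\<forall>(u, v) \<in> A. c u \<noteq> c v) \<and>
     (\<forall>(u, v) \<in> A. \<forall>(x, y) \<in> A. \<not> (c u = c y \<and> c v = c x))"

definition oriented_chromatic_number :: "'a set \<Rightarrow> ('a \<times> 'a) set \<Rightarrow> nat" where
  "oriented_chromatic_number V A = (LEAST k. \<exists>c. oriented_colouring V A k c)"

text \<open>Walks are represented by vertex lists; arcs are consecutive pairs.\<close>
definition walk_arcs :: "'a list \<Rightarrow> ('a \<times> 'a) set" where
  "walk_arcs vs = set (zip vs (tl vs))"

definition walk_length :: "'a list \<Rightarrow> nat" where
  "walk_length vs = length vs - 1"

definition is_dipath :: "('a \<times> 'a) set \<Rightarrow> 'a list \<Rightarrow> bool" where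
  "is_dipath A vs \<longleftrightarrow> length vs \<ge> 2 \<and> distinct vs \<and> walk_arcs vs \<subseteq> A"

text \<open>Directed cycle given as a closed vertex list v0 v1 ... v(n-1) v0 (n \<ge> 2 distinct
  vertices) with all arcs in A.\<close>
definition is_dicycle :: "('a \<times> 'a) set \<Rightarrow> 'a list \<Rightarrow> bool" where
  "is_dicycle A vs \<longleftrightarrow> length vs \<ge> 3 \<and> hd vs = last vs \<and> distinct (tl vs) \<and> walk_arcs vs \<subseteq> A"

definition is_ear :: "('a \<times> 'a) set \<Rightarrow> 'a set \<Rightarrow> 'a list \<Rightarrow> bool" where
  "is_ear A VH vs \<longleftrightarrow>
     (is_dipath A vs \<and> hd vs \<in> VH \<and> last vs \<in> VH \<and> (\<forall>v \<in> set (butlast (tl vs)). v \<notin> VH))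
   \<or> (is_dicycle A vs \<and> card (set vs \<inter> VH) = 1)"

definition ED_V :: "'a list \<Rightarrow> 'a list list \<Rightarrow> nat \<Rightarrow> 'a set" where
  "ED_V c0 es j = set c0 \<union> (\<Union>i<j. set (es ! i))"

definition ED_A :: "'a list \<Rightarrow> 'a list list \<Rightarrow> nat \<Rightarrow> ('a \<times> 'a) set" where
  "ED_A c0 es j = walk_arcs c0 \<union> (\<Union>i<j. walk_arcs (es ! i))"

definition ear_decomposition :: "'a set \<Rightarrow> ('a \<times> 'a) set \<Rightarrow> 'a list \<Rightarrow> 'a list list \<Rightarrow> bool" where
  "ear_decomposition V A c0 es \<longleftrightarrow>
     is_dicycle A c0 \<and>
     (\<forall>j \<le> length es. strong (ED_V c0 es j) (ED_A c0 es j)) \<and>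
     (\<forall>j < length es. is_ear A (ED_V c0 es j) (es ! j)) \<and>
     ED_V c0 es (length es) = V \<and> ED_A c0 es (length es) = A"

definition LE :: "nat \<Rightarrow> 'a set \<Rightarrow> ('a \<times> 'a) set \<Rightarrow> bool" where
  "LE i V A \<longleftrightarrow> strong V A \<and>
     (\<exists>c0 es. ear_decomposition V A c0 es \<and> (\<forall>e \<in> set es. walk_length e \<ge> i))"

end

theory Submission
  imports Defs
begin
definition TT :: "(nat \<times> nat) set" where
  "TT = {(1,5),(1,6),(2,1),(2,4),(3,1),(3,2),(3,6),(4,1),(4,3),(4,5),(5,2),(5,3),(6,2),(6,4),(6,5)}"
lemma TT_cases: "(a,b) \<in> TT \<Longrightarrow> (a = 1 \<and> b = 5) \<or> (a = 1 \<and> b = 6) \<or> (a = 2 \<and> b = 1) \<or> (a = 2 \<and> b = 4) \<or> (a = 3 \<and> b = 1) \<or> (a = 3 \<and> b = 2) \<or> (a = 3 \<and> b = 6) \<or> (a = 4 \<and> b = 1) \<or> (a = 4 \<and> b = 3) \<or> (a = 4 \<and> b = 5) \<or> (a = 5 \<and> b = 2) \<or> (a = 5 \<and> b = 3) \<or> (a = 6 \<and> b = 2) \<or> (a = 6 \<and> b = 4) \<or> (a = 6 \<and> b = 5)"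
  by (simp add: TT_def)
lemma TT_props: assumes "(a,b) \<in> TT" shows "a \<in> {1..6} \<and> b \<in> {1..6} \<and> a \<noteq> b \<and> (b,a) \<notin> TT"
  using TT_cases[OF assms] by (elim disjE conjE) (simp_all add: TT_def)
lemma TT_walk3: assumes "a \<in> {1..6}" "b \<in> {1..6}" shows "\<exists>x y. (a,x)\<in>TT \<and> (x,y)\<in>TT \<and> (y,b)\<in>TT"
proof -
  have w11: "\<exists>x y. (1::nat,x)\<in>TT \<and> (x,y)\<in>TT \<and> (y,1::nat)\<in>TT" by (rule exI[of _ 5], rule exI[of _ 2]) (simp add: TT_def)
  have w12: "\<exists>x y. (1::nat,x)\<in>TT \<and> (x,y)\<in>TT \<and> (y,2::nat)\<in>TT" by (rule exI[of _ 5], rule exI[of _ 3]) (simp add: TT_def)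
  have w13: "\<exists>x y. (1::nat,x)\<in>TT \<and> (x,y)\<in>TT \<and> (y,3::nat)\<in>TT" by (rule exI[of _ 6], rule exI[of _ 4]) (simp add: TT_def)
  have w14: "\<exists>x y. (1::nat,x)\<in>TT \<and> (x,y)\<in>TT \<and> (y,4::nat)\<in>TT" by (rule exI[of _ 5], rule exI[of _ 2]) (simp add: TT_def)
  have w15: "\<exists>x y. (1::nat,x)\<in>TT \<and> (x,y)\<in>TT \<and> (y,5::nat)\<in>TT" by (rule exI[of _ 6], rule exI[of _ 4]) (simp add: TT_def)
  have w16: "\<exists>x y. (1::nat,x)\<in>TT \<and> (x,y)\<in>TT \<and> (y,6::nat)\<in>TT" by (rule exI[of _ 5], rule exI[of _ 3]) (simp add: TT_def)
  have w21: "\<exists>x y. (2::nat,x)\<in>TT \<and> (x,y)\<in>TT \<and> (y,1::nat)\<in>TT" by (rule exI[of _ 4], rule exI[of _ 3]) (simp add: TT_def)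
  have w22: "\<exists>x y. (2::nat,x)\<in>TT \<and> (x,y)\<in>TT \<and> (y,2::nat)\<in>TT" by (rule exI[of _ 1], rule exI[of _ 5]) (simp add: TT_def)
  have w23: "\<exists>x y. (2::nat,x)\<in>TT \<and> (x,y)\<in>TT \<and> (y,3::nat)\<in>TT" by (rule exI[of _ 1], rule exI[of _ 5]) (simp add: TT_def)
  have w24: "\<exists>x y. (2::nat,x)\<in>TT \<and> (x,y)\<in>TT \<and> (y,4::nat)\<in>TT" by (rule exI[of _ 1], rule exI[of _ 6]) (simp add: TT_def)
  have w25: "\<exists>x y. (2::nat,x)\<in>TT \<and> (x,y)\<in>TT \<and> (y,5::nat)\<in>TT" by (rule exI[of _ 1], rule exI[of _ 6]) (simp add: TT_def)
  have w26: "\<exists>x y. (2::nat,x)\<in>TT \<and> (x,y)\<in>TT \<and> (y,6::nat)\<in>TT" by (rule exI[of _ 4], rule exI[of _ 1]) (simp add: TT_def)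
  have w31: "\<exists>x y. (3::nat,x)\<in>TT \<and> (x,y)\<in>TT \<and> (y,1::nat)\<in>TT" by (rule exI[of _ 2], rule exI[of _ 4]) (simp add: TT_def)
  have w32: "\<exists>x y. (3::nat,x)\<in>TT \<and> (x,y)\<in>TT \<and> (y,2::nat)\<in>TT" by (rule exI[of _ 1], rule exI[of _ 5]) (simp add: TT_def)
  have w33: "\<exists>x y. (3::nat,x)\<in>TT \<and> (x,y)\<in>TT \<and> (y,3::nat)\<in>TT" by (rule exI[of _ 1], rule exI[of _ 5]) (simp add: TT_def)
  have w34: "\<exists>x y. (3::nat,x)\<in>TT \<and> (x,y)\<in>TT \<and> (y,4::nat)\<in>TT" by (rule exI[of _ 1], rule exI[of _ 6]) (simp add: TT_def)
  have w35: "\<exists>x y. (3::nat,x)\<in>TT \<and> (x,y)\<in>TT \<and> (y,5::nat)\<in>TT" by (rule exI[of _ 1], rule exI[of _ 6]) (simp add: TT_def)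
  have w36: "\<exists>x y. (3::nat,x)\<in>TT \<and> (x,y)\<in>TT \<and> (y,6::nat)\<in>TT" by (rule exI[of _ 2], rule exI[of _ 1]) (simp add: TT_def)
  have w41: "\<exists>x y. (4::nat,x)\<in>TT \<and> (x,y)\<in>TT \<and> (y,1::nat)\<in>TT" by (rule exI[of _ 3], rule exI[of _ 2]) (simp add: TT_def)
  have w42: "\<exists>x y. (4::nat,x)\<in>TT \<and> (x,y)\<in>TT \<and> (y,2::nat)\<in>TT" by (rule exI[of _ 1], rule exI[of _ 5]) (simp add: TT_def)
  have w43: "\<exists>x y. (4::nat,x)\<in>TT \<and> (x,y)\<in>TT \<and> (y,3::nat)\<in>TT" by (rule exI[of _ 1], rule exI[of _ 5]) (simp add: TT_def)
  have w44: "\<exists>x y. (4::nat,x)\<in>TT \<and> (x,y)\<in>TT \<and> (y,4::nat)\<in>TT" by (rule exI[of _ 1], rule exI[of _ 6]) (simp add: TT_def)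
  have w45: "\<exists>x y. (4::nat,x)\<in>TT \<and> (x,y)\<in>TT \<and> (y,5::nat)\<in>TT" by (rule exI[of _ 1], rule exI[of _ 6]) (simp add: TT_def)
  have w46: "\<exists>x y. (4::nat,x)\<in>TT \<and> (x,y)\<in>TT \<and> (y,6::nat)\<in>TT" by (rule exI[of _ 3], rule exI[of _ 1]) (simp add: TT_def)
  have w51: "\<exists>x y. (5::nat,x)\<in>TT \<and> (x,y)\<in>TT \<and> (y,1::nat)\<in>TT" by (rule exI[of _ 2], rule exI[of _ 4]) (simp add: TT_def)
  have w52: "\<exists>x y. (5::nat,x)\<in>TT \<and> (x,y)\<in>TT \<and> (y,2::nat)\<in>TT" by (rule exI[of _ 3], rule exI[of _ 6]) (simp add: TT_def)
  have w53: "\<exists>x y. (5::nat,x)\<in>TT \<and> (x,y)\<in>TT \<and> (y,3::nat)\<in>TT" by (rule exI[of _ 2], rule exI[of _ 4]) (simp add: TT_def)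
  have w54: "\<exists>x y. (5::nat,x)\<in>TT \<and> (x,y)\<in>TT \<and> (y,4::nat)\<in>TT" by (rule exI[of _ 3], rule exI[of _ 2]) (simp add: TT_def)
  have w55: "\<exists>x y. (5::nat,x)\<in>TT \<and> (x,y)\<in>TT \<and> (y,5::nat)\<in>TT" by (rule exI[of _ 2], rule exI[of _ 1]) (simp add: TT_def)
  have w56: "\<exists>x y. (5::nat,x)\<in>TT \<and> (x,y)\<in>TT \<and> (y,6::nat)\<in>TT" by (rule exI[of _ 2], rule exI[of _ 1]) (simp add: TT_def)
  have w61: "\<exists>x y. (6::nat,x)\<in>TT \<and> (x,y)\<in>TT \<and> (y,1::nat)\<in>TT" by (rule exI[of _ 2], rule exI[of _ 4]) (simp add: TT_def)
  have w62: "\<exists>x y. (6::nat,x)\<in>TT \<and> (x,y)\<in>TT \<and> (y,2::nat)\<in>TT" by (rule exI[of _ 4], rule exI[of _ 3]) (simp add: TT_def)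
  have w63: "\<exists>x y. (6::nat,x)\<in>TT \<and> (x,y)\<in>TT \<and> (y,3::nat)\<in>TT" by (rule exI[of _ 2], rule exI[of _ 4]) (simp add: TT_def)
  have w64: "\<exists>x y. (6::nat,x)\<in>TT \<and> (x,y)\<in>TT \<and> (y,4::nat)\<in>TT" by (rule exI[of _ 5], rule exI[of _ 2]) (simp add: TT_def)
  have w65: "\<exists>x y. (6::nat,x)\<in>TT \<and> (x,y)\<in>TT \<and> (y,5::nat)\<in>TT" by (rule exI[of _ 2], rule exI[of _ 1]) (simp add: TT_def)
  have w66: "\<exists>x y. (6::nat,x)\<in>TT \<and> (x,y)\<in>TT \<and> (y,6::nat)\<in>TT" by (rule exI[of _ 2], rule exI[of _ 1]) (simp add: TT_def)
  have "a = 1 \<or> a = 2 \<or> a = 3 \<or> a = 4 \<or> a = 5 \<or> a = 6" "b = 1 \<or> b = 2 \<or> b = 3 \<or> b = 4 \<or> b = 5 \<or> b = 6" using assms by auto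
  then show ?thesis by (elim disjE) (simp_all only: w11 w12 w13 w14 w15 w16 w21 w22 w23 w24 w25 w26 w31 w32 w33 w34 w35 w36 w41 w42 w43 w44 w45 w46 w51 w52 w53 w54 w55 w56 w61 w62 w63 w64 w65 w66)
qed

lemma TT_walk:
  assumes "n \<ge> 3" "a \<in> {1..6}" "b \<in> {1..6}"
  shows "\<exists>g. g 0 = a \<and> g n = b \<and> (\<forall>i<n. (g i, g (Suc i)) \<in> TT)"
  using assms(1,2)
proof (induction n arbitrary: a rule: dec_induct)
  case base
  obtain x y where xy: "(a,x)\<in>TT" "(x,y)\<in>TT" "(y,b)\<in>TT" using TT_walk3[OF base assms(3)] by blast
  define g where "g = (\<lambda>i::nat. if i = 0 then a else if i = 1 then x else if i = 2 then y else b)"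
  have "\<forall>i<3. (g i, g (Suc i)) \<in> TT"
  proof (intro allI impI)
    fix i :: nat assume "i < 3"
    then have "i = 0 \<or> i = 1 \<or> i = 2" by auto
    then show "(g i, g (Suc i)) \<in> TT" using xy by (auto simp: g_def)
  qed
  then show ?case by (intro exI[of _ g]) (auto simp: g_def)
next
  case (step n)
  obtain s where s: "(a,s) \<in> TT" using step.prems TT_walk3[OF step.prems assms(3)] by blast
  then have "s \<in> {1..6}" using TT_props by blast
  then obtain g where g: "g 0 = s" "g n = b" "\<forall>i<n. (g i, g (Suc i)) \<in> TT" using step.IH by blast
  define h where "h = (\<lambda>i. if i = 0 then a else g (i - 1))"
  have "\<forall>i<Suc n. (h i, h (Suc i)) \<in> TT"
  proof (intro allI impI)
    fix i assume "i < Suc n"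
    then show "(h i, h (Suc i)) \<in> TT" using g s
      by (cases i) (auto simp: h_def)
  qed
  moreover have "h (Suc n) = b" using g step.hyps by (simp add: h_def)
  ultimately show ?case by (intro exI[of _ h]) (auto simp: h_def)
qed

lemma walk_arcs_nth: "(p,q) \<in> walk_arcs l \<longleftrightarrow> (\<exists>i. Suc i < length l \<and> p = l ! i \<and> q = l ! Suc i)"
  by (auto simp: walk_arcs_def set_zip nth_tl less_diff_conv)

lemma walk_arcs_sub: "walk_arcs l \<subseteq> set l \<times> set l"
  by (auto simp: walk_arcs_nth)

lemma walk_arcs_Nil[simp]: "walk_arcs [] = {}" by (simp add: walk_arcs_def)
lemma walk_arcs_single[simp]: "walk_arcs [x] = {}" by (simp add: walk_arcs_def)
lemma walk_arcs_Cons2[simp]: "walk_arcs (x # y # zs) = insert (x,y) (walk_arcs (y # zs))"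
  by (simp add: walk_arcs_def)

lemma walk_arcs_append: "walk_arcs (xs @ y # ys) = walk_arcs (xs @ [y]) \<union> walk_arcs (y # ys)"
proof (induction xs)
  case Nil then show ?case by simp
next
  case (Cons x xs)
  then show ?case by (cases xs) auto
qed

lemma path_ext:
  assumes "distinct xs" "set xs \<inter> VH = {}" "length xs \<ge> 2" "u \<in> VH" "v \<in> VH"
    "c u \<in> {1..6}" "c v \<in> {1..6}"
  shows "\<exists>c'. (\<forall>x\<in>VH. c' x = c x) \<and> c' ` set xs \<subseteq> {1..6} \<and>
           (\<forall>(p,q)\<in>walk_arcs (u # xs @ [v]). (c' p, c' q) \<in> TT)"
proof -
  define n where "n = Suc (length xs)"
  have "n \<ge> 3" using assms(3) by (simp add: n_def)
  then obtain g where g: "g 0 = c u" "g n = c v" "\<forall>i<n. (g i, g (Suc i)) \<in> TT"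
    using TT_walk assms(6,7) by blast
  define idx where "idx = (\<lambda>x. THE i. i < length xs \<and> xs ! i = x)"
  have idx: "idx (xs ! k) = k" if "k < length xs" for k
    unfolding idx_def using that assms(1)
    by (rule_tac the_equality) (auto simp: nth_eq_iff_index_eq)
  define c' where "c' = (\<lambda>x. if x \<in> set xs then g (Suc (idx x)) else c x)"
  define l where "l = u # xs @ [v]"
  have uv: "u \<notin> set xs" "v \<notin> set xs" using assms(2,4,5) by auto
  have key: "c' (l ! i) = g i" if "i \<le> n" for i
  proof -
    have "i = 0 \<or> i = n \<or> (\<exists>k. i = Suc k \<and> k < length xs)"
      using that n_def by (cases i) auto
    then consider "i = 0" | "i = n" | k where "i = Suc k" "k < length xs" by blast
    then show ?thesis
    proof cases
      case 1 then show ?thesis using uv g by (simp add: l_def c'_def)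
    next
      case 2 then show ?thesis using uv g by (simp add: l_def c'_def n_def nth_append)
    next
      case 3 then show ?thesis by (simp add: l_def c'_def nth_append idx)
    qed
  qed
  have "\<forall>x\<in>VH. c' x = c x" using assms(2) by (auto simp: c'_def)
  moreover have "c' ` set xs \<subseteq> {1..6}"
  proof
    fix y assume "y \<in> c' ` set xs"
    then obtain k where k: "k < length xs" "y = c' (xs ! k)" by (auto simp: in_set_conv_nth)
    then have "y = g (Suc k)" by (simp add: c'_def idx)
    moreover have "(g (Suc k), g (Suc (Suc k))) \<in> TT" using g k by (simp add: n_def)
    ultimately show "y \<in> {1..6}" using TT_props by blast
  qed
  moreover have "\<forall>(p,q)\<in>walk_arcs l. (c' p, c' q) \<in> TT"
  proof (clarify)
    fix p q assume "(p,q) \<in> walk_arcs l"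
    then obtain i where i: "Suc i < length l" "p = l ! i" "q = l ! Suc i" by (auto simp: walk_arcs_nth)
    have "length l = Suc n" by (simp add: l_def n_def)
    then show "(c' p, c' q) \<in> TT" using i key g by simp
  qed
  ultimately show ?thesis unfolding l_def by blast
qed

lemma cycle_ext:
  assumes "is_dicycle A vs" "asymmetrical A" "w \<in> set vs" "w \<in> VH"
    "\<forall>x\<in>set vs. x \<in> VH \<longrightarrow> x = w" "c w \<in> {1..6}"
  shows "\<exists>c'. (\<forall>x\<in>VH. c' x = c x) \<and> c' ` set vs \<subseteq> {1..6} \<and>
           (\<forall>(p,q)\<in>walk_arcs vs. (c' p, c' q) \<in> TT)"
proof -
  from assms(1) have len: "length vs \<ge> 3" and hl: "hd vs = last vs" and dt: "distinct (tl vs)"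
    and arcs: "walk_arcs vs \<subseteq> A" by (auto simp: is_dicycle_def)
  obtain a ys where vs: "vs = a # ys" using len by (cases vs) auto
  have ysne: "ys \<noteq> []" using len vs by auto
  have ylast: "last ys = a" using ysne hl vs by simp
  have ys: "ys \<noteq> []" "last ys = a" "distinct ys" using ysne ylast dt vs by simp_all
  have "length vs \<noteq> 3"
  proof
    assume "length vs = 3"
    then obtain b where "ys = [b, a]" using ys vs
      by (cases ys; cases "tl ys") auto
    then have "(a,b) \<in> A" "(b,a) \<in> A" using arcs vs by auto
    then show False using assms(2) by (auto simp: asymmetrical_def)
  qed
  with len have len4: "length vs \<ge> 4" by simp
  have "set vs = set ys" using vs ys by (auto intro: last_in_set)
  then have "w \<in> set ys" using assms(3) by simp
  then obtain ys1 ys2 where sp: "ys = ys1 @ w # ys2" by (meson split_list)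
  show ?thesis
  proof (cases "ys2 = []")
    case True
    then have wa: "w = a" using ys sp by simp
    have vs': "vs = w # ys1 @ [w]" using vs sp True wa by simp
    have "distinct ys1" "w \<notin> set ys1" using ys sp by auto
    moreover have "set ys1 \<inter> VH = {}" using assms(5) vs' calculation(2) by auto
    moreover have "length ys1 \<ge> 2" using len4 vs' by simp
    ultimately obtain c' where c': "\<forall>x\<in>VH. c' x = c x" "c' ` set ys1 \<subseteq> {1..6}"
      "\<forall>(p,q)\<in>walk_arcs (w # ys1 @ [w]). (c' p, c' q) \<in> TT"
      using path_ext[of ys1 VH w w c] assms(4,6) by blast
    have "c' ` set vs \<subseteq> {1..6}" using c' assms(4,6) vs' by auto
    then show ?thesis using c' vs' by metis
  next
    case False
    have "last ys2 = a" using ys(2) sp False by simp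
    then have "ys2 = butlast ys2 @ [a]" using False by (metis append_butlast_last_id)
    then obtain ys2' where ys2: "ys2 = ys2' @ [a]" by blast
    have dys: "distinct (ys1 @ w # ys2' @ [a])" using ys sp ys2 by simp
    define xs where "xs = ys2' @ a # ys1"
    have vsx: "vs = (a # ys1) @ w # (ys2' @ [a])" using vs sp ys2 by simp
    have e1: "walk_arcs vs = walk_arcs (a # ys1 @ [w]) \<union> walk_arcs (w # ys2' @ [a])"
      using walk_arcs_append[of "a # ys1" w "ys2' @ [a]"] vsx by simp
    have e2: "walk_arcs (w # xs @ [w]) = walk_arcs (w # ys2' @ [a]) \<union> walk_arcs (a # ys1 @ [w])"
      using walk_arcs_append[of "w # ys2'" a "ys1 @ [w]"] by (simp add: xs_def)
    have dx: "distinct xs" "w \<notin> set xs" using dys by (auto simp: xs_def)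
    have setx: "set vs = insert w (set xs)" using vsx by (auto simp: xs_def)
    have "set xs \<inter> VH = {}" using assms(5) setx dx(2) by auto
    moreover have "length xs \<ge> 2" using len4 vsx by (simp add: xs_def)
    ultimately obtain c' where c': "\<forall>x\<in>VH. c' x = c x" "c' ` set xs \<subseteq> {1..6}"
      "\<forall>(p,q)\<in>walk_arcs (w # xs @ [w]). (c' p, c' q) \<in> TT"
      using path_ext[of xs VH w w c] assms(4,6) dx by blast
    have "c' ` set vs \<subseteq> {1..6}" using c' assms(4,6) setx by auto
    moreover have "walk_arcs vs = walk_arcs (w # xs @ [w])" using e1 e2 by blast
    ultimately show ?thesis using c' by metis
  qed
qed

lemma ED_V_Suc: "ED_V c0 es (Suc j) = ED_V c0 es j \<union> set (es ! j)"
  by (auto simp: ED_V_def lessThan_Suc)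

lemma ED_A_Suc: "ED_A c0 es (Suc j) = ED_A c0 es j \<union> walk_arcs (es ! j)"
  by (auto simp: ED_A_def lessThan_Suc)

lemma ED_A_sub: "ED_A c0 es j \<subseteq> ED_V c0 es j \<times> ED_V c0 es j"
  using walk_arcs_sub unfolding ED_A_def ED_V_def by fast

lemma colour_inv:
  assumes ed: "ear_decomposition V A c0 es" and ln: "\<forall>e\<in>set es. walk_length e \<ge> 3"
    and asy: "asymmetrical A"
  shows "j \<le> length es \<Longrightarrow> \<exists>c. c ` ED_V c0 es j \<subseteq> {1..6} \<and> (\<forall>(p,q)\<in>ED_A c0 es j. (c p, c q) \<in> TT)"
proof (induction j)
  case 0
  have cyc: "is_dicycle A c0" using ed by (simp add: ear_decomposition_def)
  then have "c0 \<noteq> []" by (auto simp: is_dicycle_def)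
  then have "hd c0 \<in> set c0" by simp
  then obtain c' where "c' ` set c0 \<subseteq> {1..6}" "\<forall>(p,q)\<in>walk_arcs c0. (c' p, c' q) \<in> TT"
    using cycle_ext[OF cyc asy, of "hd c0" "{hd c0}" "\<lambda>_. 1"] by auto
  then show ?case by (auto simp: ED_V_def ED_A_def)
next
  case (Suc j)
  then obtain c where c: "c ` ED_V c0 es j \<subseteq> {1..6}" "\<forall>(p,q)\<in>ED_A c0 es j. (c p, c q) \<in> TT"
    by auto
  let ?VH = "ED_V c0 es j"
  let ?vs = "es ! j"
  have jl: "j < length es" using Suc.prems by simp
  have ear: "is_ear A ?VH ?vs" using ed jl by (simp add: ear_decomposition_def)
  have wl: "walk_length ?vs \<ge> 3" using ln jl by simp
  have "\<exists>c'. (\<forall>x\<in>?VH. c' x = c x) \<and> c' ` set ?vs \<subseteq> {1..6} \<and>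
           (\<forall>(p,q)\<in>walk_arcs ?vs. (c' p, c' q) \<in> TT)"
  proof (cases "is_dipath A ?vs \<and> hd ?vs \<in> ?VH \<and> last ?vs \<in> ?VH \<and> (\<forall>v \<in> set (butlast (tl ?vs)). v \<notin> ?VH)")
    case True
    then have dv: "distinct ?vs" and hv: "hd ?vs \<in> ?VH" "last ?vs \<in> ?VH"
      and inn: "\<forall>v \<in> set (butlast (tl ?vs)). v \<notin> ?VH" by (auto simp: is_dipath_def)
    have len: "length ?vs \<ge> 4" using wl by (simp add: walk_length_def)
    obtain u rest where vr: "?vs = u # rest" using len by (cases ?vs) auto
    have "rest \<noteq> []" using len vr by auto
    then have vs: "?vs = u # butlast rest @ [last rest]" using vr by simp
    define xs where "xs = butlast rest"
    have vs2: "?vs = u # xs @ [last ?vs]" using vs vr \<open>rest \<noteq> []\<close> by (simp add: xs_def)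
    have "distinct xs" using dv vs by (simp add: xs_def)
    moreover have "set xs \<inter> ?VH = {}" using inn vr by (auto simp: xs_def)
    moreover have "length xs \<ge> 2" using len vr by (simp add: xs_def)
    moreover have "u \<in> ?VH" using hv vr by simp
    ultimately obtain c' where c': "\<forall>x\<in>?VH. c' x = c x" "c' ` set xs \<subseteq> {1..6}"
      "\<forall>(p,q)\<in>walk_arcs (u # xs @ [last ?vs]). (c' p, c' q) \<in> TT"
      using path_ext[of xs ?VH u "last ?vs" c] hv c(1) by blast
    have "c' ` set ?vs \<subseteq> {1..6}"
    proof -
      have "set ?vs = insert u (insert (last ?vs) (set xs))" using vs2 by (metis list.simps(15) set_append Un_insert_right sup_bot.right_neutral insert_commute empty_set)
      then show ?thesis using c' c(1) hv \<open>u \<in> ?VH\<close> by auto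
    qed
    then show ?thesis using c' vs2 by metis
  next
    case False
    then have cy: "is_dicycle A ?vs" and cd: "card (set ?vs \<inter> ?VH) = 1" using ear by (auto simp: is_ear_def)
    obtain w where w: "set ?vs \<inter> ?VH = {w}" using cd by (meson card_1_singletonE)
    show ?thesis
      using cycle_ext[OF cy asy, of w ?VH c] w c(1) by blast
  qed
  then obtain c' where c': "\<forall>x\<in>?VH. c' x = c x" "c' ` set ?vs \<subseteq> {1..6}"
           "\<forall>(p,q)\<in>walk_arcs ?vs. (c' p, c' q) \<in> TT" by blast
  have "c' ` ED_V c0 es (Suc j) \<subseteq> {1..6}" using c' c(1) by (auto simp: ED_V_Suc)
  moreover have "\<forall>(p,q)\<in>ED_A c0 es (Suc j). (c' p, c' q) \<in> TT"
  proof clarify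
    fix p q assume "(p,q) \<in> ED_A c0 es (Suc j)"
    then consider "(p,q) \<in> ED_A c0 es j" | "(p,q) \<in> walk_arcs ?vs" by (auto simp: ED_A_Suc)
    then show "(c' p, c' q) \<in> TT"
    proof cases
      case 1
      then have "p \<in> ?VH" "q \<in> ?VH" using ED_A_sub by blast+
      then show ?thesis using 1 c c' by auto
    next
      case 2 then show ?thesis using c' by auto
    qed
  qed
  ultimately show ?case by blast
qed

theorem mainTheorem18:
  fixes V :: "'a set" and A :: "('a \<times> 'a) set"
  assumes "digraph V A" and "asymmetrical A" and "strong V A" and "LE 3 V A"
  shows "oriented_chromatic_number V A \<le> 6"
proof -
  obtain c0 es where ed: "ear_decomposition V A c0 es" and ln: "\<forall>e \<in> set es. walk_length e \<ge> 3"
    using assms(4) by (auto simp: LE_def)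
  obtain c where c: "c ` ED_V c0 es (length es) \<subseteq> {1..6}"
      "\<forall>(p,q)\<in>ED_A c0 es (length es). (c p, c q) \<in> TT"
    using colour_inv[OF ed ln assms(2), of "length es"] by auto
  have VA: "ED_V c0 es (length es) = V" "ED_A c0 es (length es) = A"
    using ed by (auto simp: ear_decomposition_def)
  have "oriented_colouring V A 6 c"
    unfolding oriented_colouring_def
  proof (intro conjI)
    show "c ` V \<subseteq> {1..6}" using c VA by simp
    show "\<forall>(u, v)\<in>A. c u \<noteq> c v" using c VA TT_props by fastforce
    show "\<forall>(u, v)\<in>A. \<forall>(x, y)\<in>A. \<not> (c u = c y \<and> c v = c x)"
    proof clarify
      fix u v x y assume "(u,v) \<in> A" "(x,y) \<in> A" "c u = c y" "c v = c x"
      then have "(c u, c v) \<in> TT" "(c v, c u) \<in> TT" using c VA by auto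
      then show False using TT_props by blast
    qed
  qed
  then have "\<exists>c. oriented_colouring V A 6 c" by blast
  then show ?thesis unfolding oriented_chromatic_number_def
    by (rule Least_le[where P="\<lambda>k. \<exists>c. oriented_colouring V A k c"])
qed

end
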